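(* Assume $n>3t+2d$. In any execution of Algorithm 1, if a correct process $p_i$ mbrb-broadcasts $(m,sn)$ and $d<c-\sqrt{c\cdot\frac{n+t}{2}}$, then at least $c-d$ correct processes mbrb-deliver $(m,sn,i)$ at most three communication steps after the mbrb-broadcast.
   Context: System model. There are $n$ asynchronous processes $p_1,\dots,p_n$ with distinct known identities. Up to $t$ are Byzantine (arbitrary behavior); the rest are correct; $c$ is the number of correct processes in the execution, $n-t\le c\le n$. The network is fully connected, asynchronous, never corrupts/duplicates/creates messages; "broadcast $M$" sends $M$ to all $n$ processes; a message adversary may suppress, per broadcast by a correct process, up to $d$ ($0\le d<c$) copies addressed to correct processes, all other copies among correct processes being received. Signatures are unforgeable and public keys are known. Time is measured in communication steps: local computation takes zero time and every imp-message has the same transfer delay of one step. Algorithm 1 (code for $p_i$). Each process stores, for each triplet $(m,sn,j)$, a set of saved valid signatures of that triplet, at most one per signer. On $\mathrm{mbrb\_broadcast}(m,sn)$: $p_i$ saves its own signature of $(m,sn,i)$ and broadcasts $\mathrm{BUNDLE}(m,sn,i,S)$, $S$ the saved signatures for $(m,sn,i)$. On receiving $\mathrm{BUNDLE}(m,sn,j,sigs)$: if $p_i$ has not already mbrb-delivered some $(-,sn,j)$ and $sigs$ contains a valid signature of $(m,sn,j)$ by $p_j$, then: (1) save all new valid signatures of $(m,sn,j)$ in $sigs$; (2) if $p_i$ has not yet signed any $(-,sn,j)$, save its own signature of $(m,sn,j)$ and broadcast $\mathrm{BUNDLE}(m,sn,j,\text{all saved signatures for }(m,sn,j))$; (3)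 if strictly more than $\frac{n+t}{2}$ signatures for $(m,sn,j)$ are saved, broadcast $\mathrm{BUNDLE}(m,sn,j,\text{all saved signatures})$ and mbrb-deliver $(m,sn,j)$. *)

theory Defs
  imports Complex_Main
begin

(* Processes are identified by 0..<n.  Signatures are modelled abstractly:
   a signature of a triplet (m,sn,j) by signer x is represented by x inside a
   bundle for (m,sn,j); unforgeability is an environment constraint (mbrb_exec). *)

datatype 'm msg = Bundle 'm nat nat "nat set"   (* BUNDLE(m, sn, j, signers) *)

datatype 'm event =
    Bcast 'm nat
  | Recv nat "'m msg"

record 'm pstate =
  psaved     :: "'m \<times> nat \<times> nat \<Rightarrow> nat set"
  psigned    :: "('m \<times> nat \<times> nat) set"
  pdelivered :: "('m \<times> nat \<times> nat) set"

definition init_state :: "'m pstate" where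
  "init_state = \<lparr>psaved = (\<lambda>_. {}), psigned = {}, pdelivered = {}\<rparr>"

(* Algorithm 1, code for p_i, one event; returns new state and list of broadcasts *)
fun handle :: "nat \<Rightarrow> nat \<Rightarrow> nat \<Rightarrow> 'm pstate \<Rightarrow> 'm event \<Rightarrow> 'm pstate \<times> 'm msg list" where
  "handle n t i s (Bcast m sn) =
     (let S = insert i (psaved s (m, sn, i)) in
      (s\<lparr>psaved := (psaved s)((m, sn, i) := S), psigned := insert (m, sn, i) (psigned s)\<rparr>,
       [Bundle m sn i S]))"
| "handle n t i s (Recv src (Bundle m sn j sigs)) =
     (if (\<exists>m'. (m', sn, j) \<in> pdelivered s) \<or> j \<notin> sigs \<or> \<not> j < n then (s, [])
      else
        (let S1 = psaved s (m, sn, j) \<union> (sigs \<inter> {..<n});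
             s1 = s\<lparr>psaved := (psaved s)((m, sn, j) := S1)\<rparr>;
             r2 = (if \<exists>m'. (m', sn, j) \<in> psigned s1 then (s1, [])
                   else (let S2 = insert i S1 in
                         (s1\<lparr>psaved := (psaved s1)((m, sn, j) := S2),
                              psigned := insert (m, sn, j) (psigned s1)\<rparr>,
                          [Bundle m sn j S2])));
             s2 = fst r2; out2 = snd r2;
             S3 = psaved s2 (m, sn, j)
         in if real (card S3) > real (n + t) / 2
            then (s2\<lparr>pdelivered := insert (m, sn, j) (pdelivered s2)\<rparr>, out2 @ [Bundle m sn j S3])
            else (s2, out2)))"

fun run :: "nat \<Rightarrow> nat \<Rightarrow> nat \<Rightarrow> 'm pstate \<Rightarrow> 'm event list \<Rightarrow> 'm pstate \<times> 'm msg list" where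
  "run n t i s [] = (s, [])"
| "run n t i s (e # es) =
     (let r1 = handle n t i s e; r2 = run n t i (fst r1) es in (fst r2, snd r1 @ snd r2))"

(* ev q k = events processed by process q at time (communication step) k *)
primrec pre_state :: "nat \<Rightarrow> nat \<Rightarrow> (nat \<Rightarrow> nat \<Rightarrow> 'm event list) \<Rightarrow> nat \<Rightarrow> nat \<Rightarrow> 'm pstate" where
  "pre_state n t ev q 0 = init_state"
| "pre_state n t ev q (Suc k) = fst (run n t q (pre_state n t ev q k) (ev q k))"

definition state_after :: "nat \<Rightarrow> nat \<Rightarrow> (nat \<Rightarrow> nat \<Rightarrow> 'm event list) \<Rightarrow> nat \<Rightarrow> nat \<Rightarrow> 'm pstate" where
  "state_after n t ev q k = pre_state n t ev q (Suc k)"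

definition outputs :: "nat \<Rightarrow> nat \<Rightarrow> (nat \<Rightarrow> nat \<Rightarrow> 'm event list) \<Rightarrow> nat \<Rightarrow> nat \<Rightarrow> 'm msg list" where
  "outputs n t ev q k = snd (run n t q (pre_state n t ev q k) (ev q k))"

(* Admissible executions: C = set of correct processes; every message between
   processes takes exactly one step; Byzantine messages are arbitrary except for
   unforgeability of correct processes' signatures. *)
definition mbrb_exec :: "nat \<Rightarrow> nat \<Rightarrow> nat \<Rightarrow> nat set \<Rightarrow> (nat \<Rightarrow> nat \<Rightarrow> 'm event list) \<Rightarrow> bool" where
  "mbrb_exec n t d C ev \<longleftrightarrow>
     C \<subseteq> {..<n} \<and> card ({..<n} - C) \<le> t \<and> d < card C \<and>
     \<comment> \<open>senders are processes\<close>
     (\<forall>q\<in>C. \<forall>k s M. Recv s M \<in> set (ev q k) \<longrightarrow> s < n) \<and>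
     \<comment> \<open>no creation / duplication of messages of correct senders; delay one step\<close>
     (\<forall>q\<in>C. \<forall>p\<in>C. \<forall>k M. count_list (ev q k) (Recv p M)
         \<le> (if k = 0 then 0 else count_list (outputs n t ev p (k - 1)) M)) \<and>
     \<comment> \<open>unforgeability: a correct signature reaches a correct process through a Byzantine
         one only if it was signed (and broadcast) at least two steps earlier\<close>
     (\<forall>q\<in>C. \<forall>k b m sn j sigs. b \<notin> C \<longrightarrow> Recv b (Bundle m sn j sigs) \<in> set (ev q k) \<longrightarrow>
         (\<forall>x\<in>sigs \<inter> C. 2 \<le> k \<and> (m, sn, j) \<in> psigned (state_after n t ev x (k - 2)))) \<and>
     \<comment> \<open>message adversary: per broadcast, at most d copies to correct processes suppressed\<close>
     (\<forall>p\<in>C. \<forall>k M. M \<in> set (outputs n t ev p k) \<longrightarrow>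
         card {q\<in>C. Recv p M \<notin> set (ev q (Suc k))} \<le> d) \<and>
     \<comment> \<open>a correct process mbrb-broadcasts at most once per sequence number\<close>
     (\<forall>p\<in>C. \<forall>sn m m' k k'. Bcast m sn \<in> set (ev p k) \<longrightarrow> Bcast m' sn \<in> set (ev p k') \<longrightarrow>
         m = m' \<and> k = k') \<and>
     (\<forall>p\<in>C. \<forall>k m sn. count_list (ev p k) (Bcast m sn) \<le> 1)"

end

theory Submission
  imports Defs
begin


definition touches :: "nat \<Rightarrow> 'm \<times> nat \<times> nat \<Rightarrow> 'm event \<Rightarrow> bool" where
 "touches r X e \<longleftrightarrow> (case X of (m',sn',j) \<Rightarrow> (e = Bcast m' sn' \<and> j = r) \<or> (\<exists>src sigs. e = Recv src (Bundle m' sn' j sigs) \<and> j \<in> sigs))"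

definition Vinv :: "nat \<Rightarrow> 'm pstate \<Rightarrow> bool" where
 "Vinv n s \<longleftrightarrow> (\<forall>X. psaved s X \<subseteq> {..<n})"

lemma handle_frame:
  assumes "\<not> touches i X e"
  shows "psaved (fst (handle n t i s e)) X = psaved s X \<and>
         (X \<in> psigned (fst (handle n t i s e)) \<longleftrightarrow> X \<in> psigned s) \<and>
         (X \<in> pdelivered (fst (handle n t i s e)) \<longleftrightarrow> X \<in> pdelivered s)"
proof (cases e)
  case (Bcast m sn)
  then show ?thesis using assms by (cases X) (auto simp: touches_def Let_def)
next
  case (Recv src M)
  then show ?thesis using assms by (cases X; cases M) (auto simp: touches_def Let_def)
qed

lemma handle_mono:
  "psaved s X \<subseteq> psaved (fst (handle n t i s e)) X \<and>
   psigned s \<subseteq> psigned (fst (handle n t i s e)) \<and>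
   pdelivered s \<subseteq> pdelivered (fst (handle n t i s e))"
proof (cases e)
  case (Bcast m sn)
  then show ?thesis by (auto simp: Let_def)
next
  case (Recv src M)
  then show ?thesis by (cases M) (auto simp: Let_def)
qed

lemma handle_V:
  assumes "i < n" "Vinv n s"
  shows "Vinv n (fst (handle n t i s e))"
proof (cases e)
  case (Bcast m sn)
  then show ?thesis using assms by (auto simp: Vinv_def Let_def)
next
  case (Recv src M)
  then show ?thesis using assms by (cases M) (auto simp: Vinv_def Let_def)
qed

lemma handle_out:
  assumes "Bundle m' sn' j S \<in> set (snd (handle n t i s e))"
  shows "touches i (m',sn',j) e"
proof (cases e)
  case (Bcast m sn)
  then show ?thesis using assms by (auto simp: touches_def Let_def)
next
  case (Recv src M)
  then show ?thesis using assms by (cases M) (auto simp: touches_def Let_def split: if_splits)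
qed

lemma handle_bcast:
  assumes "e = Bcast m' sn'"
  shows "(m',sn',i) \<in> psigned (fst (handle n t i s e)) \<and> (\<exists>S. Bundle m' sn' i S \<in> set (snd (handle n t i s e)) \<and> i \<in> S)"
  using assms by (auto simp: Let_def)

lemma handle_deliv:
  assumes "(m',sn',j) \<notin> pdelivered s" "(m',sn',j) \<in> pdelivered (fst (handle n t i s e))"
    "Vinv n s" "i < n"
  shows "\<exists>S. Bundle m' sn' j S \<in> set (snd (handle n t i s e)) \<and> j \<in> S \<and> S \<subseteq> {..<n} \<and> real (card S) > real (n+t)/2"
proof (cases e)
  case (Bcast m sn)
  then show ?thesis using assms by (auto simp: Let_def)
next
  case (Recv src M)
  then show ?thesis using assms by (cases M) (auto simp: Vinv_def Let_def split: if_splits)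
qed

lemma handle_E:
  assumes "e = Recv src (Bundle m' sn' j S)" "j \<in> S" "j < n" "Vinv n s" "i < n"
    "real (card (S \<inter> {..<n})) > real (n+t)/2"
  shows "\<exists>m''. (m'',sn',j) \<in> pdelivered (fst (handle n t i s e))"
proof -
  have fin: "finite (psaved s X)" for X using assms(4) unfolding Vinv_def
    by (meson finite_lessThan finite_subset)
  have "card (S \<inter> {..<n}) \<le> card (insert i (psaved s (m', sn', j) \<union> S \<inter> {..<n}))"
    by (rule card_mono) (use fin in auto)
  moreover have "card (S \<inter> {..<n}) \<le> card (psaved s (m', sn', j) \<union> S \<inter> {..<n})"
    by (rule card_mono) (use fin in auto)
  ultimately show ?thesis using assms by (auto simp: Let_def)
qed

lemma handle_K:
  assumes "e = Recv src (Bundle m' sn' j S)" "j \<in> S" "j < n" "\<not>(\<exists>m''. (m'',sn',j) \<in> pdelivered s)"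
  shows "S \<inter> {..<n} \<subseteq> psaved (fst (handle n t i s e)) (m',sn',j) \<and> (\<exists>m''. (m'',sn',j) \<in> psigned (fst (handle n t i s e)))"
  using assms by (auto simp: Let_def)

lemma handle_F:
  assumes "\<forall>m''. (m'',sn',j) \<notin> psigned s" "(m'',sn',j) \<in> psigned (fst (handle n t i s e))" "i \<noteq> j"
  shows "\<exists>m3 S'. Bundle m3 sn' j S' \<in> set (snd (handle n t i s e)) \<and> i \<in> S' \<and> j \<in> S'"
proof (cases e)
  case (Bcast m sn)
  then show ?thesis using assms by (auto simp: Let_def)
next
  case (Recv src M)
  then show ?thesis using assms by (cases M) (auto simp: Let_def split: if_splits)
qed

definition Qinv :: "nat \<Rightarrow> nat \<Rightarrow> nat \<Rightarrow> nat \<Rightarrow> nat \<Rightarrow> 'm pstate \<Rightarrow> bool" where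
 "Qinv n t sn j r s \<longleftrightarrow> (\<forall>m'. real (card (psaved s (m',sn,j))) > real (n+t)/2 \<longrightarrow>
     (\<exists>m''. (m'',sn,j) \<in> pdelivered s) \<or> psaved s (m',sn,j) \<subseteq> {r})"

lemma handle_Q:
  assumes "Qinv n t sn j i s" "\<not>(\<exists>m'. e = Bcast m' sn \<and> j = i)"
  shows "Qinv n t sn j i (fst (handle n t i s e))"
proof (cases e)
  case (Bcast m sn0)
  then show ?thesis using assms by (auto simp: Qinv_def Let_def)
next
  case (Recv src M)
  then show ?thesis using assms by (cases M) (auto simp: Qinv_def Let_def split: if_splits)
qed

lemma handle_P0:
  assumes "\<forall>m'. psaved s (m',sn,i) \<subseteq> {i}" "\<not>(\<exists>src m' sigs. e = Recv src (Bundle m' sn i sigs) \<and> i \<in> sigs)"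
  shows "\<forall>m'. psaved (fst (handle n t i s e)) (m',sn,i) \<subseteq> {i}"
proof (cases e)
  case (Bcast m sn0)
  then show ?thesis using assms by (auto simp: Let_def)
next
  case (Recv src M)
  then show ?thesis using assms by (cases M) (auto simp: Let_def split: if_splits)
qed




lemma run_simps2[simp]: "run n t i s (e # es) = (fst (run n t i (fst (handle n t i s e)) es), snd (handle n t i s e) @ snd (run n t i (fst (handle n t i s e)) es))"
  by (simp add: Let_def)
declare run.simps(2)[simp del]

lemma run_mono:
  "psaved s X \<subseteq> psaved (fst (run n t i s E)) X \<and>
   psigned s \<subseteq> psigned (fst (run n t i s E)) \<and>
   pdelivered s \<subseteq> pdelivered (fst (run n t i s E))"
proof (induction E arbitrary: s)
  case Nil then show ?case by simp
next
  case (Cons e es)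
  from handle_mono[of s X n t i e] Cons.IH[of "fst (handle n t i s e)"]
  show ?case unfolding run_simps2 by auto
qed

lemma run_V: "i < n \<Longrightarrow> Vinv n s \<Longrightarrow> Vinv n (fst (run n t i s E))"
  by (induction E arbitrary: s) (auto simp: run_simps2 handle_V)

lemma run_out: "Bundle m' sn' j S \<in> set (snd (run n t i s E)) \<Longrightarrow> \<exists>e\<in>set E. touches i (m',sn',j) e"
  by (induction E arbitrary: s) (auto simp: run_simps2 dest: handle_out)

definition active :: "'m pstate \<Rightarrow> 'm \<times> nat \<times> nat \<Rightarrow> bool" where
  "active s X \<longleftrightarrow> X \<in> psigned s \<or> X \<in> pdelivered s \<or> psaved s X \<noteq> {}"

lemma run_origin: "active (fst (run n t i s E)) X \<Longrightarrow> active s X \<or> (\<exists>e\<in>set E. touches i X e)"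
proof (induction E arbitrary: s)
  case Nil then show ?case by simp
next
  case (Cons e es)
  show ?case
  proof (cases "touches i X e")
    case True then show ?thesis by auto
  next
    case False
    from Cons.IH[of "fst (handle n t i s e)"] Cons.prems
    have "active (fst (handle n t i s e)) X \<or> (\<exists>e\<in>set es. touches i X e)" by (simp add: run_simps2)
    then show ?thesis using handle_frame[OF False, of n t s] unfolding active_def by auto
  qed
qed

lemma run_bcast:
  assumes "Bcast m' sn' \<in> set E"
  shows "(m',sn',i) \<in> psigned (fst (run n t i s E)) \<and> (\<exists>S. Bundle m' sn' i S \<in> set (snd (run n t i s E)) \<and> i \<in> S)"
  using assms
proof (induction E arbitrary: s)
  case Nil then show ?case by simp
next
  case (Cons e es)
  show ?case
  proof (cases "e = Bcast m' sn'")
    case True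
    from handle_bcast[OF True] run_mono[of "fst (handle n t i s e)" _ n t i es]
    show ?thesis unfolding run_simps2 by force
  next
    case False
    with Cons.prems have "Bcast m' sn' \<in> set es" by simp
    from Cons.IH[OF this, of "fst (handle n t i s e)"] show ?thesis unfolding run_simps2 by auto
  qed
qed

lemma run_deliv:
  assumes "(m',sn',j) \<notin> pdelivered s" "(m',sn',j) \<in> pdelivered (fst (run n t i s E))"
    "Vinv n s" "i < n"
  shows "\<exists>S. Bundle m' sn' j S \<in> set (snd (run n t i s E)) \<and> j \<in> S \<and> S \<subseteq> {..<n} \<and> real (card S) > real (n+t)/2"
  using assms
proof (induction E arbitrary: s)
  case Nil then show ?case by simp
next
  case (Cons e es)
  show ?case
  proof (cases "(m',sn',j) \<in> pdelivered (fst (handle n t i s e))")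
    case True
    from handle_deliv[OF Cons.prems(1) True Cons.prems(3,4)] show ?thesis unfolding run_simps2 by auto
  next
    case False
    from Cons.IH[OF False _ handle_V[OF Cons.prems(4,3)] Cons.prems(4)] Cons.prems(2)
    show ?thesis unfolding run_simps2 by auto
  qed
qed

lemma run_E:
  assumes "Recv src (Bundle m' sn' j S) \<in> set E" "j \<in> S" "j < n" "Vinv n s" "i < n"
    "real (card (S \<inter> {..<n})) > real (n+t)/2"
  shows "\<exists>m''. (m'',sn',j) \<in> pdelivered (fst (run n t i s E))"
  using assms
proof (induction E arbitrary: s)
  case Nil then show ?case by simp
next
  case (Cons e es)
  show ?case
  proof (cases "e = Recv src (Bundle m' sn' j S)")
    case True
    from handle_E[OF True Cons.prems(2-6)] run_mono[of "fst (handle n t i s e)" _ n t i es]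
    show ?thesis unfolding run_simps2 by (metis fst_conv subsetD)
  next
    case False
    with Cons.prems have "Recv src (Bundle m' sn' j S) \<in> set es" by simp
    from Cons.IH[OF this Cons.prems(2,3) handle_V[OF Cons.prems(5,4)] Cons.prems(5,6)]
    show ?thesis unfolding run_simps2 by auto
  qed
qed

lemma run_K:
  assumes "Recv src (Bundle m' sn' j S) \<in> set E" "j \<in> S" "j < n"
    "\<not>(\<exists>m''. (m'',sn',j) \<in> pdelivered (fst (run n t i s E)))"
  shows "S \<inter> {..<n} \<subseteq> psaved (fst (run n t i s E)) (m',sn',j) \<and> (\<exists>m''. (m'',sn',j) \<in> psigned (fst (run n t i s E)))"
  using assms
proof (induction E arbitrary: s)
  case Nil then show ?case by simp
next
  case (Cons e es)
  have nd: "\<not>(\<exists>m''. (m'',sn',j) \<in> pdelivered (fst (run n t i (fst (handle n t i s e)) es)))"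
    using Cons.prems(4) by (simp add: run_simps2)
  show ?case
  proof (cases "e = Recv src (Bundle m' sn' j S)")
    case True
    have "\<not>(\<exists>m''. (m'',sn',j) \<in> pdelivered s)"
      using nd handle_mono[of s _ n t i e] run_mono[of "fst (handle n t i s e)" _ n t i es] by blast
    from handle_K[OF True Cons.prems(2,3) this, where t=t and i=i] run_mono[of "fst (handle n t i s e)" "(m',sn',j)" n t i es]
    show ?thesis unfolding run_simps2 by (metis fst_conv subset_trans subsetD)
  next
    case False
    with Cons.prems have "Recv src (Bundle m' sn' j S) \<in> set es" by simp
    from Cons.IH[OF this Cons.prems(2,3) nd]
    show ?thesis unfolding run_simps2 by auto
  qed
qed

lemma run_F:
  assumes "\<forall>m''. (m'',sn',j) \<notin> psigned s" "(m'',sn',j) \<in> psigned (fst (run n t i s E))" "i \<noteq> j"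
  shows "\<exists>m3 S'. Bundle m3 sn' j S' \<in> set (snd (run n t i s E)) \<and> i \<in> S' \<and> j \<in> S'"
  using assms
proof (induction E arbitrary: s m'')
  case Nil then show ?case by simp
next
  case (Cons e es)
  show ?case
  proof (cases "\<exists>m3. (m3,sn',j) \<in> psigned (fst (handle n t i s e))")
    case True
    then obtain m3 where "(m3,sn',j) \<in> psigned (fst (handle n t i s e))" by blast
    from handle_F[OF Cons.prems(1) this Cons.prems(3)] show ?thesis unfolding run_simps2 by auto
  next
    case False
    from Cons.IH[of "fst (handle n t i s e)"] False Cons.prems(2,3)
    show ?thesis unfolding run_simps2 by fastforce
  qed
qed

lemma run_Q:
  assumes "Qinv n t sn j i s" "\<forall>e\<in>set E. \<not>(\<exists>m'. e = Bcast m' sn \<and> j = i)"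
  shows "Qinv n t sn j i (fst (run n t i s E))"
  using assms by (induction E arbitrary: s) (auto simp: run_simps2 handle_Q)

lemma run_P0:
  assumes "\<forall>m'. psaved s (m',sn,i) \<subseteq> {i}" "\<forall>e\<in>set E. \<not>(\<exists>src m' sigs. e = Recv src (Bundle m' sn i sigs) \<and> i \<in> sigs)"
  shows "\<forall>m'. psaved (fst (run n t i s E)) (m',sn,i) \<subseteq> {i}"
  using assms
proof (induction E arbitrary: s)
  case Nil then show ?case by simp
next
  case (Cons e es)
  have "\<forall>m'. psaved (fst (handle n t i s e)) (m',sn,i) \<subseteq> {i}"
    by (rule handle_P0) (use Cons.prems in auto)
  from Cons.IH[OF this] Cons.prems(2) show ?case by (simp add: run_simps2)
qed




locale exec =
  fixes n t d :: nat and C :: "nat set" and ev :: "nat \<Rightarrow> nat \<Rightarrow> 'm event list"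
  assumes ex: "mbrb_exec n t d C ev"
begin

abbreviation st where "st q k \<equiv> pre_state n t ev q k"

lemma sa_eq: "state_after n t ev q k = fst (run n t q (st q k) (ev q k))"
  by (simp add: state_after_def)

lemma C_sub: "C \<subseteq> {..<n}" using ex by (simp add: mbrb_exec_def)
lemma cardC: "d < card C" using ex by (simp add: mbrb_exec_def)
lemma cnt: "q \<in> C \<Longrightarrow> p \<in> C \<Longrightarrow> count_list (ev q k) (Recv p M) \<le> (if k = 0 then 0 else count_list (outputs n t ev p (k - 1)) M)"
  using ex by (simp add: mbrb_exec_def)
lemma unforg: "q \<in> C \<Longrightarrow> b \<notin> C \<Longrightarrow> Recv b (Bundle m sn j sigs) \<in> set (ev q k) \<Longrightarrow> x \<in> sigs \<Longrightarrow> x \<in> C \<Longrightarrow>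
   2 \<le> k \<and> (m, sn, j) \<in> psigned (state_after n t ev x (k - 2))"
proof -
  assume a: "q \<in> C" "b \<notin> C" "Recv b (Bundle m sn j sigs) \<in> set (ev q k)" "x \<in> sigs" "x \<in> C"
  have "\<forall>q\<in>C. \<forall>k b m sn j sigs. b \<notin> C \<longrightarrow> Recv b (Bundle m sn j sigs) \<in> set (ev q k) \<longrightarrow>
         (\<forall>x\<in>sigs \<inter> C. 2 \<le> k \<and> (m, sn, j) \<in> psigned (state_after n t ev x (k - 2)))"
    using ex unfolding mbrb_exec_def by (elim conjE) assumption
  with a show ?thesis by blast
qed
lemma adv: "p \<in> C \<Longrightarrow> M \<in> set (outputs n t ev p k) \<Longrightarrow> card {q\<in>C. Recv p M \<notin> set (ev q (Suc k))} \<le> d"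
proof -
  assume a: "p \<in> C" "M \<in> set (outputs n t ev p k)"
  have "\<forall>p\<in>C. \<forall>k M. M \<in> set (outputs n t ev p k) \<longrightarrow>
         card {q\<in>C. Recv p M \<notin> set (ev q (Suc k))} \<le> d"
    using ex unfolding mbrb_exec_def by (elim conjE) assumption
  with a show ?thesis by blast
qed
lemma uniq: "p \<in> C \<Longrightarrow> Bcast m sn \<in> set (ev p k) \<Longrightarrow> Bcast m' sn \<in> set (ev p k') \<Longrightarrow> m = m' \<and> k = k'"
  using ex unfolding mbrb_exec_def by blast

lemma finC: "finite C" using C_sub finite_subset by blast

lemma adv2: "p \<in> C \<Longrightarrow> M \<in> set (outputs n t ev p k) \<Longrightarrow> card {q\<in>C. Recv p M \<in> set (ev q (Suc k))} \<ge> card C - d"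
proof -
  assume a: "p \<in> C" "M \<in> set (outputs n t ev p k)"
  have "card C = card {q\<in>C. Recv p M \<in> set (ev q (Suc k))} + card {q\<in>C. Recv p M \<notin> set (ev q (Suc k))}"
    using finC by (subst card_Un_disjoint[symmetric]) (auto intro: arg_cong[where f=card])
  with adv[OF a] show ?thesis by linarith
qed

lemma mono_step: "psaved (st q k) X \<subseteq> psaved (st q (Suc k)) X \<and> psigned (st q k) \<subseteq> psigned (st q (Suc k)) \<and> pdelivered (st q k) \<subseteq> pdelivered (st q (Suc k))"
  using run_mono by simp

lemma mono_steps: "k \<le> k' \<Longrightarrow> psaved (st q k) X \<subseteq> psaved (st q k') X \<and> psigned (st q k) \<subseteq> psigned (st q k') \<and> pdelivered (st q k) \<subseteq> pdelivered (st q k')"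
proof (induction k' rule: dec_induct)
  case base then show ?case by simp
next
  case (step k'') then show ?case using mono_step[of q k'' X] by blast
qed

lemma V_st: "q < n \<Longrightarrow> Vinv n (st q k)"
proof (induction k)
  case 0 then show ?case by (simp add: Vinv_def init_state_def)
next
  case (Suc k) then show ?case using run_V[of q n "st q k" t "ev q k"] by simp
qed

lemma origin_steps: "active (state_after n t ev q k) X \<Longrightarrow> \<exists>k'\<le>k. \<exists>e\<in>set (ev q k'). touches q X e"
proof (induction k)
  case 0
  then show ?case using run_origin[of n t q "st q 0" "ev q 0" X]
    by (auto simp: sa_eq active_def init_state_def)
next
  case (Suc k)
  from run_origin[of n t q "st q (Suc k)" "ev q (Suc k)" X] Suc.prems
  have "active (st q (Suc k)) X \<or> (\<exists>e\<in>set (ev q (Suc k)). touches q X e)" by (simp add: sa_eq)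
  then show ?case
  proof
    assume "active (st q (Suc k)) X"
    then have "active (state_after n t ev q k) X" by (simp add: state_after_def)
    from Suc.IH[OF this] show ?thesis using le_SucI by blast
  qed blast
qed

lemma recv_correct: "q \<in> C \<Longrightarrow> p \<in> C \<Longrightarrow> Recv p M \<in> set (ev q k) \<Longrightarrow> 1 \<le> k \<and> M \<in> set (outputs n t ev p (k - 1))"
proof -
  assume a: "q \<in> C" "p \<in> C" "Recv p M \<in> set (ev q k)"
  have "count_list (ev q k) (Recv p M) \<noteq> 0" using a(3) count_list_0_iff by metis
  with cnt[OF a(1,2), of k M] have "k \<noteq> 0" "count_list (outputs n t ev p (k - 1)) M \<noteq> 0"
    by (auto split: if_splits)
  then show ?thesis by (simp add: count_list_0_iff)
qed

lemma outputs_eq: "outputs n t ev p k = snd (run n t p (st p k) (ev p k))"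
  by (simp add: outputs_def)

lemma lemA: "j \<in> C \<Longrightarrow> q \<in> C \<Longrightarrow> Recv src (Bundle m' sn' j sigs) \<in> set (ev q k) \<Longrightarrow> j \<in> sigs \<Longrightarrow>
   1 \<le> k \<and> (m', sn', j) \<in> psigned (state_after n t ev j (k - 1))"
proof (induction k arbitrary: q src sigs)
  case 0
  then show ?case using unforg[of q src m' sn' j sigs 0 j] recv_correct[of q src _ 0] by fastforce
next
  case (Suc k)
  show ?case
  proof (cases "src \<in> C")
    case False
    from unforg[OF Suc.prems(2) False Suc.prems(3,4,1)] have "2 \<le> Suc k" "(m', sn', j) \<in> psigned (state_after n t ev j (Suc k - 2))" by auto
    moreover have "psigned (state_after n t ev j (Suc k - 2)) \<subseteq> psigned (state_after n t ev j (Suc k - 1))"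
      unfolding state_after_def using mono_steps[of "Suc (Suc k - 2)" "Suc (Suc k - 1)" j] by auto
    ultimately show ?thesis by auto
  next
    case True
    from recv_correct[OF Suc.prems(2) True Suc.prems(3)]
    have "Bundle m' sn' j sigs \<in> set (snd (run n t src (st src k) (ev src k)))" by (simp add: outputs_eq)
    from run_out[OF this] obtain e where e: "e \<in> set (ev src k)" "touches src (m', sn', j) e" by blast
    then consider "e = Bcast m' sn'" "j = src" | src' sigs' where "e = Recv src' (Bundle m' sn' j sigs')" "j \<in> sigs'"
      unfolding touches_def by auto
    then show ?thesis
    proof cases
      case 1
      with run_bcast[where E="ev src k" and n=n and t=t and i=src and s="st src k"] e show ?thesis by (simp add: sa_eq)
    next
      case 2
      from Suc.IH[OF Suc.prems(1) True, of src' sigs'] e 2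
      have "1 \<le> k" "(m', sn', j) \<in> psigned (state_after n t ev j (k - 1))" by auto
      moreover have "psigned (state_after n t ev j (k - 1)) \<subseteq> psigned (state_after n t ev j (Suc k - 1))"
        unfolding state_after_def using mono_steps[of "Suc (k - 1)" "Suc (Suc k - 1)" j] by auto
      ultimately show ?thesis by auto
    qed
  qed
qed

end




locale exec2 = exec n t d C ev for n t d C and ev :: "nat \<Rightarrow> nat \<Rightarrow> 'm event list" +
  fixes i sn \<tau> :: nat and m :: 'm
  assumes iC: "i \<in> C" and bc: "Bcast m sn \<in> set (ev i \<tau>)"
begin

lemma lemB: "active (state_after n t ev i k) (m',sn,i) \<Longrightarrow> m' = m \<and> \<tau> \<le> k"
proof (induction k rule: less_induct)
  case (less k)
  from origin_steps[OF less.prems] obtain k' e where ke: "k' \<le> k" "e \<in> set (ev i k')" "touches i (m',sn,i) e"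
    by blast
  then consider "e = Bcast m' sn" | src sigs where "e = Recv src (Bundle m' sn i sigs)" "i \<in> sigs"
    unfolding touches_def by auto
  then show ?case
  proof cases
    case 1
    with uniq[OF iC bc, of m' k'] ke show ?thesis by auto
  next
    case 2
    from lemA[OF iC iC, of src m' sn sigs k'] ke 2
    have "1 \<le> k'" "(m', sn, i) \<in> psigned (state_after n t ev i (k' - 1))" by auto
    then have act: "active (state_after n t ev i (k' - 1)) (m',sn,i)" by (simp add: active_def)
    have "k' - 1 < k" using \<open>1 \<le> k'\<close> ke(1) by linarith
    from less.IH[OF this act] have "m' = m" "\<tau> \<le> k' - 1" by auto
    with \<open>1 \<le> k'\<close> ke(1) show ?thesis by simp
  qed
qed

lemma C1: "q \<in> C \<Longrightarrow> Recv src (Bundle m' sn i sigs) \<in> set (ev q k) \<Longrightarrow> i \<in> sigs \<Longrightarrow> m' = m \<and> Suc \<tau> \<le> k"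
proof -
  assume a: "q \<in> C" "Recv src (Bundle m' sn i sigs) \<in> set (ev q k)" "i \<in> sigs"
  from lemA[OF iC a] have "1 \<le> k" "(m', sn, i) \<in> psigned (state_after n t ev i (k - 1))" by auto
  then have "active (state_after n t ev i (k - 1)) (m',sn,i)" by (simp add: active_def)
  from lemB[OF this] \<open>1 \<le> k\<close> show ?thesis by auto
qed

lemma C2: "q \<in> C \<Longrightarrow> active (state_after n t ev q k) (m',sn,i) \<Longrightarrow> m' = m \<and> \<tau> \<le> k \<and> (q \<noteq> i \<longrightarrow> Suc \<tau> \<le> k)"
proof -
  assume a: "q \<in> C" "active (state_after n t ev q k) (m',sn,i)"
  from origin_steps[OF a(2)] obtain k' e where ke: "k' \<le> k" "e \<in> set (ev q k')" "touches q (m',sn,i) e"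
    by blast
  then consider "e = Bcast m' sn" "i = q" | src sigs where "e = Recv src (Bundle m' sn i sigs)" "i \<in> sigs"
    unfolding touches_def by auto
  then show ?thesis
  proof cases
    case 1
    with uniq[OF iC bc, of m' k'] ke show ?thesis by auto
  next
    case 2
    from C1[OF a(1)] ke 2 show ?thesis by fastforce
  qed
qed

lemma safety: "q \<in> C \<Longrightarrow> (m',sn,i) \<in> pdelivered (state_after n t ev q k) \<Longrightarrow> m' = m"
  using C2 by (auto simp: active_def)

lemma Qall: "q \<in> C \<Longrightarrow> Qinv n t sn i q (st q k)"
proof (induction k)
  case 0 then show ?case by (simp add: Qinv_def init_state_def)
next
  case (Suc k)
  show ?case
  proof (cases "q = i \<and> k = \<tau>")
    case False
    have "\<forall>e\<in>set (ev q k). \<not>(\<exists>m'. e = Bcast m' sn \<and> i = q)"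
      using False uniq[OF iC bc] by blast
    from run_Q[OF Suc.IH[OF Suc.prems] this] show ?thesis by simp
  next
    case True
    have emp: "psaved (st i \<tau>) (m',sn,i) \<subseteq> {i}" for m'
    proof (cases \<tau>)
      case 0 then show ?thesis by (simp add: init_state_def)
    next
      case (Suc k0)
      have "\<not> active (state_after n t ev i k0) (m',sn,i)" using C2[OF iC] Suc by fastforce
      then show ?thesis using Suc by (simp add: active_def state_after_def)
    qed
    have "\<forall>e\<in>set (ev i \<tau>). \<not>(\<exists>src m' sigs. e = Recv src (Bundle m' sn i sigs) \<and> i \<in> sigs)"
      using C1[OF iC] by fastforce
    from run_P0[OF _ this, of "st i \<tau>" n t] emp
    have "\<forall>m'. psaved (st i (Suc \<tau>)) (m',sn,i) \<subseteq> {i}" by simp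
    then show ?thesis using True by (simp add: Qinv_def)
  qed
qed

end




lemma card_filter_sum: "finite A \<Longrightarrow> card {x\<in>A. P x} = (\<Sum>x\<in>A. if P x then 1 else 0::nat)"
  by (simp add: sum.inter_filter[symmetric])

context exec2 begin

lemma first_deliv: "X \<in> pdelivered (st q K) \<Longrightarrow> \<exists>k<K. X \<notin> pdelivered (st q k) \<and> X \<in> pdelivered (st q (Suc k))"
proof (induction K)
  case 0 then show ?case by (simp add: init_state_def)
next
  case (Suc K)
  show ?case
  proof (cases "X \<in> pdelivered (st q K)")
    case True then show ?thesis using Suc.IH less_Suc_eq by blast
  next
    case False then show ?thesis using Suc.prems by blast
  qed
qed

lemma sq_ineq:
  assumes sq: "real d < real (card C) - sqrt (real (card C) * (real (n + t) / 2))"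
  shows "real (card C) * (real (n + t) / 2) < real ((card C - d) * (card C - d))"
proof -
  let ?x = "real (card C) * (real (n + t) / 2)"
  have x0: "0 \<le> ?x" by simp
  have "sqrt ?x < real (card C - d)" using sq cardC by (simp add: of_nat_diff)
  then have "(sqrt ?x)^2 < (real (card C - d))^2"
    by (rule power_strict_mono) auto
  then show ?thesis using x0 by (simp add: power2_eq_square)
qed

lemma main_deliv:
  assumes sq: "real d < real (card C) - sqrt (real (card C) * (real (n + t) / 2))"
  shows "\<exists>q\<in>C. (m,sn,i) \<in> pdelivered (state_after n t ev q (\<tau>+2))"
proof (rule ccontr)
  assume "\<not> ?thesis"
  then have nd0: "\<forall>q\<in>C. (m,sn,i) \<notin> pdelivered (state_after n t ev q (\<tau>+2))" by blast
  have nd: "(m',sn,i) \<notin> pdelivered (state_after n t ev q k)" if "q \<in> C" "k \<le> \<tau>+2" for q k m'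
  proof
    assume a: "(m',sn,i) \<in> pdelivered (state_after n t ev q k)"
    with safety[OF that(1)] have "m' = m" by blast
    moreover have "pdelivered (state_after n t ev q k) \<subseteq> pdelivered (state_after n t ev q (\<tau>+2))"
      unfolding state_after_def using mono_steps[of "Suc k" "Suc (\<tau>+2)" q] that(2) by auto
    ultimately show False using a nd0 that(1) by blast
  qed
  define b where "b = real (n+t)/2"
  define c where "c = card C"
  from run_bcast[where E="ev i \<tau>" and n=n and t=t and i=i and s="st i \<tau>"] bc
  obtain S0 where S0: "Bundle m sn i S0 \<in> set (outputs n t ev i \<tau>)" "i \<in> S0"
    by (auto simp: outputs_eq)
  define W where "W = {q\<in>C. Recv i (Bundle m sn i S0) \<in> set (ev q (Suc \<tau>))}"
  have cW: "card W \<ge> c - d" unfolding W_def c_def using adv2[OF iC S0(1)] .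
  have WC: "W \<subseteq> C" unfolding W_def by auto
  have iln: "i < n" using iC C_sub by auto
  have finW: "finite W" using WC finC finite_subset by blast
  have cd: "d < c" using cardC c_def by simp
  show False
  proof (cases "b < 1")
    case True
    have "W \<noteq> {}" using cW cd by auto
    then obtain q where q: "q \<in> W" by blast
    then have qC: "q \<in> C" "q < n" using WC C_sub by auto
    have "card (S0 \<inter> {..<n}) \<ge> 1"
    proof -
      have "i \<in> S0 \<inter> {..<n}" using S0 iln by auto
      then have "S0 \<inter> {..<n} \<noteq> {}" by blast
      moreover have "finite (S0 \<inter> {..<n})" by simp
      ultimately show ?thesis by (simp add: Suc_le_eq card_gt_0_iff)
    qed
    then have "real (card (S0 \<inter> {..<n})) > real (n+t)/2" using True b_def by simp
    from run_E[OF _ S0(2) iln V_st[OF qC(2), of "Suc \<tau>"] qC(2) this, where src=i and E="ev q (Suc \<tau>)" and m'=m and sn'=sn] q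
    obtain m'' where "(m'',sn,i) \<in> pdelivered (state_after n t ev q (Suc \<tau>))"
      unfolding W_def by (auto simp: sa_eq)
    with nd[OF qC(1), of "Suc \<tau>"] show False by auto
  next
    case False
    then have b1: "b \<ge> 1" by simp
    define W' where "W' = W - {i}"
    have outW: "\<exists>S. Bundle m sn i S \<in> set (outputs n t ev w (Suc \<tau>)) \<and> w \<in> S \<and> i \<in> S" if w: "w \<in> W'" for w
    proof -
      have wC: "w \<in> C" "w \<noteq> i" "w < n" using w WC C_sub unfolding W'_def by auto
      have rv: "Recv i (Bundle m sn i S0) \<in> set (ev w (Suc \<tau>))" using w unfolding W'_def W_def by auto
      have ndw: "\<not>(\<exists>m''. (m'',sn,i) \<in> pdelivered (fst (run n t w (st w (Suc \<tau>)) (ev w (Suc \<tau>)))))"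
        using nd[OF wC(1), of "Suc \<tau>"] by (simp add: sa_eq)
      from run_K[OF rv S0(2) iln ndw] obtain m'' where sg: "(m'',sn,i) \<in> psigned (fst (run n t w (st w (Suc \<tau>)) (ev w (Suc \<tau>))))"
        by blast
      have uns: "\<forall>m''. (m'',sn,i) \<notin> psigned (st w (Suc \<tau>))"
      proof (intro allI notI)
        fix m3 assume "(m3,sn,i) \<in> psigned (st w (Suc \<tau>))"
        then have "active (state_after n t ev w \<tau>) (m3,sn,i)" by (simp add: active_def state_after_def)
        from C2[OF wC(1) this] wC(2) show False by auto
      qed
      from run_F[OF uns sg wC(2)] obtain m3 S' where o: "Bundle m3 sn i S' \<in> set (outputs n t ev w (Suc \<tau>))" "w \<in> S'" "i \<in> S'"
        by (auto simp: outputs_eq)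
      from run_out[OF o(1)[unfolded outputs_eq]] obtain e where e: "e \<in> set (ev w (Suc \<tau>))" "touches w (m3,sn,i) e" by blast
      then have "m3 = m" using wC(2) C1[OF wC(1)] unfolding touches_def by fastforce
      with o show ?thesis by blast
    qed
    then have "\<forall>w\<in>W'. \<exists>S. Bundle m sn i S \<in> set (outputs n t ev w (Suc \<tau>)) \<and> w \<in> S \<and> i \<in> S" by blast
    from bchoice[OF this] obtain f where f: "\<forall>w\<in>W'. Bundle m sn i (f w) \<in> set (outputs n t ev w (Suc \<tau>)) \<and> w \<in> f w \<and> i \<in> f w"
      by blast
    define R where "R r w \<longleftrightarrow> Recv w (Bundle m sn i (f w)) \<in> set (ev r (Suc (Suc \<tau>)))" for r w
    define T where "T r = {w\<in>W'. R r w} \<union> (if r \<in> W then {i} else {})" for r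
    let ?X = "(m,sn,i)"
    have Tsub: "T r \<subseteq> psaved (state_after n t ev r (\<tau>+2)) ?X" if rC: "r \<in> C" for r
    proof
      fix x assume x: "x \<in> T r"
      have ndr: "\<not>(\<exists>m''. (m'',sn,i) \<in> pdelivered (fst (run n t r (st r k) (ev r k))))" if "k \<le> \<tau>+2" for k
        using nd[OF rC that] by (simp add: sa_eq)
      show "x \<in> psaved (state_after n t ev r (\<tau>+2)) ?X"
      proof (cases "x \<in> W' \<and> R r x")
        case True
        have xn: "x < n" using True WC C_sub unfolding W'_def by auto
        have rv: "Recv x (Bundle m sn i (f x)) \<in> set (ev r (Suc (Suc \<tau>)))" using True R_def by simp
        have "i \<in> f x" "x \<in> f x" using f True by auto
        from run_K[OF rv \<open>i \<in> f x\<close> iln ndr[of "Suc (Suc \<tau>)"]] \<open>x \<in> f x\<close> xn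
        show ?thesis by (auto simp: sa_eq)
      next
        case False
        with x have "x = i" "r \<in> W" unfolding T_def by (auto split: if_splits)
        then have rv: "Recv i (Bundle m sn i S0) \<in> set (ev r (Suc \<tau>))" unfolding W_def by auto
        from run_K[OF rv S0(2) iln ndr[of "Suc \<tau>"]] iln S0(2)
        have "i \<in> psaved (state_after n t ev r (Suc \<tau>)) ?X" by (auto simp: sa_eq)
        moreover have "psaved (state_after n t ev r (Suc \<tau>)) ?X \<subseteq> psaved (state_after n t ev r (\<tau>+2)) ?X"
          unfolding state_after_def using mono_steps[of "Suc (Suc \<tau>)" "Suc (\<tau>+2)" r ?X] by simp
        ultimately show ?thesis using \<open>x = i\<close> by blast
      qed
    qed
    have finW': "finite W'" using finW W'_def by simp
    have W'C: "W' \<subseteq> C" using WC W'_def by auto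
    have iW': "i \<notin> W'" unfolding W'_def by simp
    have cardT: "card (T r) = card {w\<in>W'. R r w} + (if r \<in> W then 1 else 0)" for r
    proof (cases "r \<in> W")
      case True
      have "T r = insert i {w\<in>W'. R r w}" unfolding T_def using True by auto
      then show ?thesis using finW' iW' True by simp
    next
      case False
      then show ?thesis unfolding T_def by simp
    qed
    have s1: "(\<Sum>r\<in>C. card {w\<in>W'. R r w}) = (\<Sum>w\<in>W'. card {r\<in>C. R r w})"
    proof -
      have "(\<Sum>r\<in>C. card {w\<in>W'. R r w}) = (\<Sum>r\<in>C. \<Sum>w\<in>W'. if R r w then 1 else 0)"
        using finW' by (simp only: card_filter_sum)
      also have "\<dots> = (\<Sum>w\<in>W'. \<Sum>r\<in>C. if R r w then 1 else 0)" by (rule sum.swap)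
      also have "\<dots> = (\<Sum>w\<in>W'. card {r\<in>C. R r w})"
        using finC by (simp only: card_filter_sum)
      finally show ?thesis .
    qed
    have s2: "(\<Sum>w\<in>W'. card {r\<in>C. R r w}) \<ge> card W' * (c - d)"
    proof -
      have "(\<Sum>w\<in>W'. card {r\<in>C. R r w}) \<ge> (\<Sum>w\<in>W'. c - d)"
      proof (rule sum_mono)
        fix w assume w: "w \<in> W'"
        with f W'C have "w \<in> C" "Bundle m sn i (f w) \<in> set (outputs n t ev w (Suc \<tau>))" by auto
        from adv2[OF this] show "c - d \<le> card {r\<in>C. R r w}" unfolding R_def c_def .
      qed
      then show ?thesis by simp
    qed
    have s3: "(\<Sum>r\<in>C. (if r \<in> W then 1 else 0::nat)) = card W"
    proof -
      have "(\<Sum>r\<in>C. (if r \<in> W then 1 else 0::nat)) = card {r\<in>C. r \<in> W}"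
        using finC by (simp only: card_filter_sum)
      also have "{r\<in>C. r \<in> W} = W" using WC by auto
      finally show ?thesis .
    qed
    have sumT: "(\<Sum>r\<in>C. card (T r)) \<ge> (c - d) * (c - d)"
    proof -
      have "(\<Sum>r\<in>C. card (T r)) = (\<Sum>r\<in>C. card {w\<in>W'. R r w}) + (\<Sum>r\<in>C. (if r \<in> W then 1 else 0::nat))"
        by (simp add: cardT sum.distrib)
      then have eq: "(\<Sum>r\<in>C. card (T r)) \<ge> card W' * (c - d) + card W" using s1 s2 s3 by linarith
      have w1: "card W' + 1 \<ge> card W" "card W' \<le> card W"
        unfolding W'_def using finW by (auto simp: card_Diff_singleton_if)
      have "card W' * (c - d) + card W \<ge> (c - d) * (c - d)"
      proof (cases "card W' \<ge> c - d")
        case True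
        then have "(c - d) * (c - d) \<le> card W' * (c - d)" by (rule mult_le_mono1)
        then show ?thesis by linarith
      next
        case False
        then have "card W = c - d" "card W' = c - d - 1" "c - d \<ge> 1" using w1 cW by linarith+
        then show ?thesis by (cases "c - d") auto
      qed
      with eq show ?thesis by linarith
    qed
    have "\<exists>r\<in>C. real (card (T r)) > b"
    proof (rule ccontr)
      assume "\<not> ?thesis"
      then have "\<forall>r\<in>C. real (card (T r)) \<le> b" by auto
      then have "(\<Sum>r\<in>C. real (card (T r))) \<le> (\<Sum>r\<in>C. b)" by (intro sum_mono) blast
      then have "real (\<Sum>r\<in>C. card (T r)) \<le> real c * b" by (simp add: c_def)
      moreover have "real ((c - d) * (c - d)) \<le> real (\<Sum>r\<in>C. card (T r))" using sumT by linarith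
      moreover have "real c * b < real ((c - d) * (c - d))" using sq_ineq[OF sq] unfolding b_def c_def by simp
      ultimately show False by linarith
    qed
    then obtain r where rC: "r \<in> C" and rT: "real (card (T r)) > b" by blast
    have rn: "r < n" using rC C_sub by auto
    have finP: "finite (psaved (state_after n t ev r (\<tau>+2)) ?X)"
      using V_st[OF rn, of "Suc (\<tau>+2)"] unfolding Vinv_def state_after_def
      by (meson finite_lessThan finite_subset)
    have "card (T r) \<le> card (psaved (state_after n t ev r (\<tau>+2)) ?X)"
      by (rule card_mono[OF finP Tsub[OF rC]])
    then have big: "real (card (psaved (st r (Suc (\<tau>+2))) ?X)) > real (n+t)/2"
      using rT b_def by (simp add: state_after_def)
    have "card (T r) \<ge> 2" using rT b1 by linarith
    have notsub: "\<not> T r \<subseteq> {r}"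
    proof
      assume "T r \<subseteq> {r}"
      then have "card (T r) \<le> card {r}" by (intro card_mono) auto
      with \<open>card (T r) \<ge> 2\<close> show False by simp
    qed
    from Qall[OF rC, of "Suc (\<tau>+2)"] big
    have "(\<exists>m''. (m'',sn,i) \<in> pdelivered (st r (Suc (\<tau>+2)))) \<or> psaved (st r (Suc (\<tau>+2))) ?X \<subseteq> {r}"
      unfolding Qinv_def by blast
    then show False
    proof
      assume "\<exists>m''. (m'',sn,i) \<in> pdelivered (st r (Suc (\<tau>+2)))"
      with nd[OF rC, of "\<tau>+2"] show False by (auto simp: state_after_def)
    next
      assume "psaved (st r (Suc (\<tau>+2))) ?X \<subseteq> {r}"
      with Tsub[OF rC] notsub show False by (auto simp: state_after_def)
    qed
  qed
qed

end




context exec2 begin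

lemma final:
  assumes sq: "real d < real (card C) - sqrt (real (card C) * (real (n + t) / 2))"
  shows "card {q \<in> C. (m, sn, i) \<in> pdelivered (state_after n t ev q (\<tau> + 3))} \<ge> card C - d"
proof -
  from main_deliv[OF sq] obtain q where qC: "q \<in> C" and qd: "(m,sn,i) \<in> pdelivered (st q (Suc (\<tau>+2)))"
    by (auto simp: state_after_def)
  have qn: "q < n" using qC C_sub by auto
  have iln: "i < n" using iC C_sub by auto
  from first_deliv[OF qd] obtain k where k: "k < Suc (\<tau>+2)" "(m,sn,i) \<notin> pdelivered (st q k)" "(m,sn,i) \<in> pdelivered (st q (Suc k))"
    by blast
  from run_deliv[OF k(2) _ V_st[OF qn] qn, where t=t and E="ev q k"] k(3)
  obtain S where S: "Bundle m sn i S \<in> set (outputs n t ev q k)" "i \<in> S" "S \<subseteq> {..<n}" "real (card S) > real (n+t)/2"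
    by (auto simp: outputs_eq)
  let ?A = "{r\<in>C. Recv q (Bundle m sn i S) \<in> set (ev r (Suc k))}"
  have "?A \<subseteq> {q \<in> C. (m, sn, i) \<in> pdelivered (state_after n t ev q (\<tau> + 3))}"
  proof
    fix r assume r: "r \<in> ?A"
    then have rC: "r \<in> C" and rn: "r < n" using C_sub by auto
    have SS: "S \<inter> {..<n} = S" using S(3) by auto
    from run_E[OF _ S(2) iln V_st[OF rn, of "Suc k"] rn, where src=q and E="ev r (Suc k)" and t=t and m'=m and sn'=sn] r S(4) SS
    obtain m'' where "(m'',sn,i) \<in> pdelivered (state_after n t ev r (Suc k))"
      by (auto simp: sa_eq)
    moreover then have "m'' = m" using safety[OF rC] by blast
    moreover have "pdelivered (state_after n t ev r (Suc k)) \<subseteq> pdelivered (state_after n t ev r (\<tau> + 3))"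
      unfolding state_after_def using mono_steps[of "Suc (Suc k)" "Suc (\<tau>+3)" r] k(1) by auto
    ultimately show "r \<in> {q \<in> C. (m, sn, i) \<in> pdelivered (state_after n t ev q (\<tau> + 3))}" using rC by auto
  qed
  then have "card ?A \<le> card {q \<in> C. (m, sn, i) \<in> pdelivered (state_after n t ev q (\<tau> + 3))}"
    by (rule card_mono[rotated]) (use finC in auto)
  moreover have "card ?A \<ge> card C - d" using adv2[OF qC S(1)] .
  ultimately show ?thesis by linarith
qed

end

theorem mainTheorem9:
  fixes n t d :: nat and C :: "nat set" and ev :: "nat \<Rightarrow> nat \<Rightarrow> 'm event list"
    and i sn \<tau> :: nat and m :: 'm
  assumes "mbrb_exec n t d C ev"
    and "n > 3 * t + 2 * d"
    and "i \<in> C"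
    and "Bcast m sn \<in> set (ev i \<tau>)"
    and "real d < real (card C) - sqrt (real (card C) * (real (n + t) / 2))"
  shows "card {q \<in> C. (m, sn, i) \<in> pdelivered (state_after n t ev q (\<tau> + 3))} \<ge> card C - d"
proof -
  interpret exec2 n t d C ev i sn \<tau> m
    using assms(1,3,4) by (simp add: exec2_def exec_def exec2_axioms_def)
  show ?thesis by (rule final[OF assms(5)])
qed


end
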